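(* Let $R$ be a commutative ring with identity whose set of zero-divisors contains a nonzero element, and let $n>1$. Then the orthogonality graph $O(M_n(R))$ is connected and has diameter at most $4$.
   Context: The orthogonality graph $O(S)$ of a ring $S$ is the undirected graph whose vertices are the nonzero two-sided zero-divisors of $S$, distinct vertices $x,y$ being adjacent iff $xy=yx=0$; the diameter is the supremum of graph distances between vertices. *)

theory Defs
  imports "HOL-Analysis.Analysis" "HOL-Library.Extended_Nat"
begin

text \<open>The orthogonality graph of a ring S whose elements form a type 'b, with
  multiplication mul and zero z passed explicitly (needed because on the type
  of matrices 'a^'n^'n the class multiplication is componentwise, while the
  ring multiplication is the matrix product).\<close>

definition two_sided_zd :: "('b \<Rightarrow> 'b \<Rightarrow> 'b) \<Rightarrow> 'b \<Rightarrow> 'b \<Rightarrow> bool" where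
  "two_sided_zd mul z x \<longleftrightarrow>
     (\<exists>a. a \<noteq> z \<and> mul a x = z) \<and> (\<exists>b. b \<noteq> z \<and> mul x b = z)"

definition orth_vertices :: "('b \<Rightarrow> 'b \<Rightarrow> 'b) \<Rightarrow> 'b \<Rightarrow> 'b set" where
  "orth_vertices mul z = {x. x \<noteq> z \<and> two_sided_zd mul z x}"

definition orth_adj :: "('b \<Rightarrow> 'b \<Rightarrow> 'b) \<Rightarrow> 'b \<Rightarrow> 'b \<Rightarrow> 'b \<Rightarrow> bool" where
  "orth_adj mul z x y \<longleftrightarrow> x \<in> orth_vertices mul z \<and> y \<in> orth_vertices mul z \<and>
     x \<noteq> y \<and> mul x y = z \<and> mul y x = z"

text \<open>A walk: nonempty list of vertices, consecutive entries adjacent.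
  It has length xs - 1 edges.\<close>
definition orth_walk :: "('b \<Rightarrow> 'b \<Rightarrow> 'b) \<Rightarrow> 'b \<Rightarrow> 'b list \<Rightarrow> bool" where
  "orth_walk mul z xs \<longleftrightarrow> xs \<noteq> [] \<and> set xs \<subseteq> orth_vertices mul z \<and>
     (\<forall>i. Suc i < length xs \<longrightarrow> orth_adj mul z (xs ! i) (xs ! Suc i))"

definition orth_connected :: "('b \<Rightarrow> 'b \<Rightarrow> 'b) \<Rightarrow> 'b \<Rightarrow> bool" where
  "orth_connected mul z \<longleftrightarrow>
     (\<forall>x\<in>orth_vertices mul z. \<forall>y\<in>orth_vertices mul z.
        \<exists>xs. orth_walk mul z xs \<and> hd xs = x \<and> last xs = y)"

text \<open>Graph distance (infinity if no walk exists) and diameter (supremum).\<close>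
definition orth_dist :: "('b \<Rightarrow> 'b \<Rightarrow> 'b) \<Rightarrow> 'b \<Rightarrow> 'b \<Rightarrow> 'b \<Rightarrow> enat" where
  "orth_dist mul z x y =
     (INF xs \<in> {xs. orth_walk mul z xs \<and> hd xs = x \<and> last xs = y}. enat (length xs - 1))"

definition orth_diam :: "('b \<Rightarrow> 'b \<Rightarrow> 'b) \<Rightarrow> 'b \<Rightarrow> enat" where
  "orth_diam mul z =
     (SUP x \<in> orth_vertices mul z. SUP y \<in> orth_vertices mul z. orth_dist mul z x y)"

end

theory Submission
  imports Defs
begin

definition rowrep :: "'a::comm_ring_1^'n^'n \<Rightarrow> 'n \<Rightarrow> 'a^'n \<Rightarrow> 'a^'n^'n" where
  "rowrep W b v = (\<chi> i. if i = b then v else W$i)"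

definition cofm :: "'a::comm_ring_1^'n^'n \<Rightarrow> 'n \<Rightarrow> 'n \<Rightarrow> 'a^'n^'n" where
  "cofm W b a = (\<chi> i j. if i = b then (if j = a then 1 else 0) else if j = a then 0 else W$i$j)"

lemma rowop_set:
  fixes W :: "'a::comm_ring_1^'n::finite^'n"
  assumes "finite S" "b \<notin> S"
  shows "det (\<chi> i. if i \<in> S then W$i - W$i$a *s W$b else W$i) = det W"
  using assms
proof (induction S rule: finite_induct)
  case empty
  then show ?case by simp
next
  case (insert s S)
  let ?WS = "(\<chi> i. if i \<in> S then W$i - W$i$a *s W$b else W$i) :: 'a^'n^'n"
  have sb: "s \<noteq> b" using insert by auto
  have eq: "(\<chi> i. if i \<in> insert s S then W$i - W$i$a *s W$b else W$i) =
     (\<chi> k. if k = s then row s ?WS + (- W$s$a) *s row b ?WS else row k ?WS)"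
    using insert sb by (auto simp: vec_eq_iff row_def)
  show ?case unfolding eq det_row_operation[OF sb] using insert by auto
qed

lemma Lcof:
  fixes W :: "'a::comm_ring_1^'n::finite^'n"
  assumes "W$b = axis a 1"
  shows "det (cofm W b a) = det W"
proof -
  have "cofm W b a = (\<chi> i. if i \<in> UNIV - {b} then W$i - W$i$a *s W$b else W$i)"
    using assms by (auto simp: vec_eq_iff cofm_def axis_def)
  then show ?thesis using rowop_set[of "UNIV - {b}" b W a] by simp
qed


lemma det_rowrep_sum:
  fixes W :: "'a::comm_ring_1^'n::finite^'n"
  assumes "finite S"
  shows "det (rowrep W b (\<Sum>m\<in>S. f m *s axis m 1)) = (\<Sum>m\<in>S. f m * det (rowrep W b (axis m 1)))"
proof -
  have "det (rowrep W b (\<Sum>m\<in>S. f m *s axis m 1)) =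
     (\<Sum>m\<in>S. det (\<chi> i. if i = b then f m *s axis m 1 else W$i))"
    unfolding rowrep_def by (rule det_linear_row_sum[OF assms])
  also have "\<dots> = (\<Sum>m\<in>S. f m * det (rowrep W b (axis m 1)))"
    unfolding rowrep_def by (rule sum.cong[OF refl], rule det_row_mul)
  finally show ?thesis .
qed

definition zmat :: "'a::comm_ring_1^'n^'n \<Rightarrow> 'n set \<Rightarrow> 'n set \<Rightarrow> ('n \<Rightarrow> 'n) \<Rightarrow> ('n \<Rightarrow> 'n) \<Rightarrow> 'a^'n^'n \<Rightarrow> 'a^'n^'n" where
  "zmat X I J \<rho> \<sigma> N = (\<chi> i j. if i \<in> I then (if j \<in> J then X$(\<rho> i)$(\<sigma> j) else 0)
       else (if j \<in> J then 0 else N$i$j))"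

definition kills :: "'a::comm_ring_1 \<Rightarrow> 'a^'n^'n \<Rightarrow> nat \<Rightarrow> bool" where
  "kills c X t \<longleftrightarrow> (\<forall>I J \<rho> \<sigma> N. card I = t \<longrightarrow> card J = t \<longrightarrow> c * det (zmat X I J \<rho> \<sigma> N) = 0)"

definition mkM :: "'a::comm_ring_1^'n^'n \<Rightarrow> 'a \<Rightarrow> 'n set \<Rightarrow> 'n set \<Rightarrow> ('n \<Rightarrow> 'n) \<Rightarrow> ('n \<Rightarrow> 'n) \<Rightarrow> 'a^'n^'n \<Rightarrow> 'a^'n^'n" where
  "mkM X c I J \<rho> \<sigma> N = (\<chi> x y. c * (\<Sum>a\<in>J. \<Sum>b\<in>I. if \<sigma> a = x \<and> \<rho> b = y then det (cofm (zmat X I J \<rho> \<sigma> N) b a) else 0))"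

lemma inner_zero:
  fixes X :: "'a::comm_ring_1^'n::finite^'n"
  assumes k: "kills c X t" and I: "card I = t" and J: "card J = t" and bI: "b \<in> I"
  shows "c * (\<Sum>a\<in>J. X$r$(\<sigma> a) * det (cofm (zmat X I J \<rho> \<sigma> N) b a)) = 0"
proof -
  let ?Z = "zmat X I J \<rho> \<sigma> N"
  have D: "det (cofm ?Z b a) = det (rowrep ?Z b (axis a 1))" for a
  proof -
    have "cofm ?Z b a = cofm (rowrep ?Z b (axis a 1)) b a"
      by (simp add: cofm_def rowrep_def vec_eq_iff)
    also have "det \<dots> = det (rowrep ?Z b (axis a 1))"
      by (rule Lcof) (simp add: rowrep_def)
    finally show ?thesis by simp
  qed
  have "(\<Sum>a\<in>J. X$r$(\<sigma> a) * det (cofm ?Z b a)) = det (rowrep ?Z b (\<Sum>a\<in>J. X$r$(\<sigma> a) *s axis a 1))"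
    by (simp add: D det_rowrep_sum)
  also have "rowrep ?Z b (\<Sum>a\<in>J. X$r$(\<sigma> a) *s axis a 1) = zmat X I J (\<rho>(b := r)) \<sigma> N"
  proof -
    have "(\<Sum>a\<in>J. X$r$(\<sigma> a) *s axis a 1) $ j = (if j \<in> J then X$r$(\<sigma> j) else 0)" for j
      by (simp add: sum_component axis_def if_distrib[of "\<lambda>z. _ * z"] sum.delta cong: if_cong)
    then show ?thesis using bI by (auto simp: vec_eq_iff rowrep_def zmat_def)
  qed
  finally show ?thesis using k I J by (simp add: kills_def)
qed


lemma XM_zero:
  fixes X :: "'a::comm_ring_1^'n::finite^'n"
  assumes k: "kills c X t" and I: "card I = t" and J: "card J = t"
  shows "X ** mkM X c I J \<rho> \<sigma> N = 0"
proof -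
  let ?D = "\<lambda>a b. det (cofm (zmat X I J \<rho> \<sigma> N) b a)"
  have "(X ** mkM X c I J \<rho> \<sigma> N) $ r $ y = 0" for r y
  proof -
    have "(X ** mkM X c I J \<rho> \<sigma> N) $ r $ y =
       (\<Sum>x\<in>UNIV. X$r$x * (c * (\<Sum>a\<in>J. \<Sum>b\<in>I. if \<sigma> a = x \<and> \<rho> b = y then ?D a b else 0)))"
      by (simp add: matrix_matrix_mult_def mkM_def)
    also have "\<dots> = (\<Sum>x\<in>UNIV. \<Sum>a\<in>J. \<Sum>b\<in>I. if \<sigma> a = x \<and> \<rho> b = y then X$r$x * c * ?D a b else 0)"
      by (simp add: sum_distrib_left if_distrib mult.assoc cong: if_cong)
    also have "\<dots> = (\<Sum>a\<in>J. \<Sum>b\<in>I. \<Sum>x\<in>UNIV. if \<sigma> a = x \<and> \<rho> b = y then X$r$x * c * ?D a b else 0)"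
      by (simp add: sum.swap[of _ UNIV] )
    also have "\<dots> = (\<Sum>a\<in>J. \<Sum>b\<in>I. if \<rho> b = y then X$r$(\<sigma> a) * c * ?D a b else 0)"
    proof (rule sum.cong[OF refl], rule sum.cong[OF refl])
      fix a b
      have "(\<Sum>x\<in>UNIV. if \<sigma> a = x \<and> \<rho> b = y then X$r$x * c * ?D a b else 0) =
            (\<Sum>x\<in>UNIV. if \<sigma> a = x then (if \<rho> b = y then X$r$x * c * ?D a b else 0) else 0)"
        by (rule sum.cong) auto
      also have "\<dots> = (if \<rho> b = y then X$r$(\<sigma> a) * c * ?D a b else 0)"
        by (simp add: sum.delta)
      finally show "(\<Sum>x\<in>UNIV. if \<sigma> a = x \<and> \<rho> b = y then X$r$x * c * ?D a b else 0) =
            (if \<rho> b = y then X$r$(\<sigma> a) * c * ?D a b else 0)" .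
    qed
    also have "\<dots> = (\<Sum>b\<in>I. \<Sum>a\<in>J. if \<rho> b = y then X$r$(\<sigma> a) * c * ?D a b else 0)"
      by (rule sum.swap)
    also have "\<dots> = (\<Sum>b\<in>I. if \<rho> b = y then c * (\<Sum>a\<in>J. X$r$(\<sigma> a) * ?D a b) else 0)"
      by (rule sum.cong[OF refl]) (auto simp: sum_distrib_left mult_ac)
    also have "\<dots> = 0"
      using inner_zero[OF k I J] by (intro sum.neutral) auto
    finally show ?thesis .
  qed
  then show ?thesis by (simp add: vec_eq_iff)
qed


lemma transpose_zmat: "transpose (zmat X I J \<rho> \<sigma> N) = zmat (transpose X) J I \<sigma> \<rho> (transpose N)"
  by (simp add: vec_eq_iff zmat_def transpose_def)

lemma transpose_cofm: "transpose (cofm W b a) = cofm (transpose W) a b"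
  by (simp add: vec_eq_iff cofm_def transpose_def)

lemma kills_transpose:
  fixes X :: "'a::comm_ring_1^'n::finite^'n"
  assumes "kills c X t" shows "kills c (transpose X) t"
  unfolding kills_def
proof (intro allI impI)
  fix I J :: "'n set" and \<rho> \<sigma> :: "'n \<Rightarrow> 'n" and N :: "'a^'n^'n" assume "card I = t" "card J = t"
  have "zmat (transpose X) I J \<rho> \<sigma> N = transpose (zmat X J I \<sigma> \<rho> (transpose N))"
    by (simp add: transpose_zmat)
  then show "c * det (zmat (transpose X) I J \<rho> \<sigma> N) = 0"
    using assms \<open>card I = t\<close> \<open>card J = t\<close> by (simp add: kills_def)
qed

lemma transpose_mkM:
  fixes X :: "'a::comm_ring_1^'n::finite^'n"
  shows "transpose (mkM X c I J \<rho> \<sigma> N) = mkM (transpose X) c J I \<sigma> \<rho> (transpose N)"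
proof -
  have "(\<Sum>a\<in>J. \<Sum>b\<in>I. if \<sigma> a = y \<and> \<rho> b = x then det (cofm (zmat X I J \<rho> \<sigma> N) b a) else 0)
     = (\<Sum>b\<in>I. \<Sum>a\<in>J. if \<rho> b = x \<and> \<sigma> a = y then det (cofm (zmat (transpose X) J I \<sigma> \<rho> (transpose N)) a b) else 0)"
    for x y
  proof -
    have "det (cofm (zmat (transpose X) J I \<sigma> \<rho> (transpose N)) a b) = det (cofm (zmat X I J \<rho> \<sigma> N) b a)" for a b
      by (metis det_transpose transpose_cofm transpose_zmat)
    note eq = this
    show ?thesis by (subst sum.swap) (simp only: eq conj_commute)
  qed
  note eq2 = this
  have tr: "\<And>(A::'a^'n^'n) i j. transpose A $ i $ j = A $ j $ i" by (simp add: transpose_def)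
  show ?thesis unfolding vec_eq_iff tr mkM_def vec_lambda_beta eq2 by simp
qed

lemma MX_zero:
  fixes X :: "'a::comm_ring_1^'n::finite^'n"
  assumes k: "kills c X t" and I: "card I = t" and J: "card J = t"
  shows "mkM X c I J \<rho> \<sigma> N ** X = 0"
proof -
  have "transpose X ** mkM (transpose X) c J I \<sigma> \<rho> (transpose N) = 0"
    by (rule XM_zero[OF kills_transpose[OF k] J I])
  then have "transpose (mkM X c I J \<rho> \<sigma> N ** X) = 0"
    by (simp add: matrix_transpose_mul transpose_mkM)
  then show ?thesis by (metis transpose_transpose transpose_mat mat_0)
qed


lemma not_kills0:
  fixes X :: "'a::comm_ring_1^'n::finite^'n"
  assumes "c \<noteq> 0" shows "\<not> kills c X 0"
proof
  assume "kills c X 0"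
  then have "c * det (zmat X {} {} id id (mat 1)) = 0" by (simp add: kills_def)
  moreover have "zmat X {} {} id id (mat 1) = mat 1" by (simp add: zmat_def vec_eq_iff)
  ultimately show False using assms by simp
qed

lemma det_kernel:
  fixes X :: "'a::comm_ring_1^'n::finite^'n"
  assumes "X *v b = 0"
  shows "b$k * det X = 0"
proof -
  let ?W = "transpose X"
  have s: "(\<Sum>i\<in>UNIV. b$i *s row i ?W) = 0"
    using assms by (simp add: vec_eq_iff matrix_vector_mult_def row_def transpose_def sum_component mult.commute)
  have "0 = det (\<chi> i'. if i' = k then (\<Sum>i\<in>UNIV. b$i *s row i ?W) else ?W$i')"
    unfolding s by (simp add: det_row_0)
  also have "\<dots> = (\<Sum>i\<in>UNIV. det (\<chi> i'. if i' = k then b$i *s row i ?W else ?W$i'))"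
    by (rule det_linear_row_sum) simp
  also have "\<dots> = (\<Sum>i\<in>UNIV. b$i * det (\<chi> i'. if i' = k then row i ?W else ?W$i'))"
    by (simp add: det_row_mul)
  also have "\<dots> = (\<Sum>i\<in>UNIV. if i = k then b$k * det ?W else 0)"
  proof (rule sum.cong[OF refl])
    fix i
    show "b$i * det (\<chi> i'. if i' = k then row i ?W else ?W$i') = (if i = k then b$k * det ?W else 0)"
    proof (cases "i = k")
      case True
      then have "(\<chi> i'. if i' = k then row i ?W else ?W$i') = ?W" by (simp add: vec_eq_iff row_def)
      then show ?thesis using True by simp
    next
      case False
      have "det (\<chi> i'. if i' = k then row i ?W else ?W$i') = 0"
        by (rule det_identical_rows[OF False]) (simp add: row_def vec_eq_iff False)
      then show ?thesis using False by simp
    qed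
  qed
  also have "\<dots> = b$k * det X" by simp
  finally show ?thesis by simp
qed

lemma kills_top:
  fixes X :: "'a::comm_ring_1^'n::finite^'n"
  assumes "c * det X = 0"
  shows "kills c X CARD('n)"
  unfolding kills_def
proof (intro allI impI)
  fix I J :: "'n set" and \<rho> \<sigma> :: "'n \<Rightarrow> 'n" and N :: "'a^'n^'n"
  assume "card I = CARD('n)" "card J = CARD('n)"
  then have IJ: "I = UNIV" "J = UNIV" by (simp_all add: card_eq_UNIV_imp_eq_UNIV)
  let ?G = "(\<chi> i j. if j = \<rho> i then 1 else 0) :: 'a^'n^'n"
  let ?H = "(\<chi> i j. if i = \<sigma> j then 1 else 0) :: 'a^'n^'n"
  have zz: "zmat X I J \<rho> \<sigma> N = ?G ** X ** ?H"
  proof -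
    have g: "(?G ** A) $ i $ j = A $ (\<rho> i) $ j" for A :: "'a^'n^'n" and i j
    proof -
      have "(?G ** A) $ i $ j = (\<Sum>k\<in>UNIV. if k = \<rho> i then A$k$j else 0)"
        unfolding matrix_matrix_mult_def by (simp only: vec_lambda_beta) (rule sum.cong, auto)
      then show ?thesis by simp
    qed
    have h: "(A ** ?H) $ i $ j = A $ i $ (\<sigma> j)" for A :: "'a^'n^'n" and i j
    proof -
      have "(A ** ?H) $ i $ j = (\<Sum>k\<in>UNIV. if k = \<sigma> j then A$i$k else 0)"
        unfolding matrix_matrix_mult_def by (simp only: vec_lambda_beta) (rule sum.cong, auto)
      then show ?thesis by simp
    qed
    show ?thesis by (simp add: IJ zmat_def vec_eq_iff g h)
  qed
  show "c * det (zmat X I J \<rho> \<sigma> N) = 0"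
  proof -
    have "c * det (?G ** X ** ?H) = (c * det X) * (det ?G * det ?H)"
      by (simp add: det_mul mult_ac)
    then show ?thesis using assms \<open>zmat X I J \<rho> \<sigma> N = ?G ** X ** ?H\<close> by simp
  qed
qed


lemma step:
  fixes X :: "'a::comm_ring_1^'n::finite^'n"
  assumes kt: "kills c X (Suc s)" and nk: "\<not> kills c X s" and sn: "s < CARD('n)"
  shows "\<exists>M. M \<noteq> 0 \<and> X ** M = 0 \<and> M ** X = 0"
proof -
  obtain I' J' :: "'n set" and \<rho> \<sigma> :: "'n \<Rightarrow> 'n" and N :: "'a^'n^'n"
    where cI: "card I' = s" and cJ: "card J' = s" and nz: "c * det (zmat X I' J' \<rho> \<sigma> N) \<noteq> 0"
    using nk unfolding kills_def by blast
  let ?Z' = "zmat X I' J' \<rho> \<sigma> N"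
  have "I' \<noteq> UNIV" using cI sn by auto
  then obtain b where bI: "b \<notin> I'" by blast
  have rowb: "?Z' = rowrep ?Z' b (\<Sum>m\<in>UNIV - J'. N$b$m *s axis m 1)"
  proof -
    have "(\<Sum>m\<in>UNIV - J'. N$b$m *s axis m 1) $ j = (if j \<in> J' then 0 else N$b$j)" for j
      by (simp add: sum_component axis_def if_distrib[of "\<lambda>z. _ * z"] sum.delta cong: if_cong)
    then show ?thesis using bI by (auto simp: vec_eq_iff rowrep_def zmat_def)
  qed
  have "\<exists>a. a \<notin> J' \<and> c * det (rowrep ?Z' b (axis a 1)) \<noteq> 0"
  proof (rule ccontr)
    assume "\<not> ?thesis"
    then have "\<forall>m\<in>UNIV - J'. c * (N$b$m * det (rowrep ?Z' b (axis m 1))) = 0"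
      by (auto simp: mult.left_commute[of c])
    then have "c * (\<Sum>m\<in>UNIV - J'. N$b$m * det (rowrep ?Z' b (axis m 1))) = 0"
      by (simp add: sum_distrib_left)
    then have "c * det ?Z' = 0"
      by (subst rowb) (simp add: det_rowrep_sum)
    with nz show False by simp
  qed
  then obtain a where aJ: "a \<notin> J'" and nz2: "c * det (rowrep ?Z' b (axis a 1)) \<noteq> 0" by blast
  have "\<rho> ` I' \<noteq> UNIV"
    using card_image_le[of I' \<rho>] cI sn by (metis finite card_UNIV_def not_le)
  then obtain y0 where y0: "y0 \<notin> \<rho> ` I'" by blast
  have "\<sigma> ` J' \<noteq> UNIV"
    using card_image_le[of J' \<sigma>] cJ sn by (metis finite card_UNIV_def not_le)
  then obtain x0 where x0: "x0 \<notin> \<sigma> ` J'" by blast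
  define I where "I = insert b I'"
  define J where "J = insert a J'"
  define \<rho>' where "\<rho>' = \<rho>(b := y0)"
  define \<sigma>' where "\<sigma>' = \<sigma>(a := x0)"
  have cI2: "card I = Suc s" using cI bI by (simp add: I_def)
  have cJ2: "card J = Suc s" using cJ aJ by (simp add: J_def)
  let ?Z = "zmat X I J \<rho>' \<sigma>' N"
  let ?W = "rowrep ?Z' b (axis a 1)"
  have "cofm ?Z b a = cofm ?W b a"
    by (auto simp: vec_eq_iff cofm_def zmat_def rowrep_def I_def J_def \<rho>'_def \<sigma>'_def)
  moreover have "det (cofm ?W b a) = det ?W"
    by (rule Lcof) (simp add: rowrep_def)
  ultimately have Dab: "c * det (cofm ?Z b a) \<noteq> 0" using nz2 by simp
  define M where "M = mkM X c I J \<rho>' \<sigma>' N"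
  have "M $ x0 $ y0 = c * det (cofm ?Z b a)"
  proof -
    have "(\<Sum>a'\<in>J. \<Sum>b'\<in>I. if \<sigma>' a' = x0 \<and> \<rho>' b' = y0 then det (cofm ?Z b' a') else 0)
        = (\<Sum>a'\<in>J. if a' = a then (\<Sum>b'\<in>I. if b' = b then det (cofm ?Z b' a') else 0) else 0)"
    proof (rule sum.cong[OF refl])
      fix a' assume a': "a' \<in> J"
      show "(\<Sum>b'\<in>I. if \<sigma>' a' = x0 \<and> \<rho>' b' = y0 then det (cofm ?Z b' a') else 0) =
          (if a' = a then (\<Sum>b'\<in>I. if b' = b then det (cofm ?Z b' a') else 0) else 0)"
      proof (cases "a' = a")
        case True
        show ?thesis
        proof (rule trans[OF sum.cong[OF refl]])
          fix b' assume b': "b' \<in> I"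
          show "(if \<sigma>' a' = x0 \<and> \<rho>' b' = y0 then det (cofm ?Z b' a') else 0) =
              (if b' = b then det (cofm ?Z b' a') else 0)"
            using True b' y0 by (auto simp: \<sigma>'_def \<rho>'_def I_def)
        qed (simp add: True)
      next
        case False
        then have "\<sigma>' a' \<noteq> x0" using a' x0 by (auto simp: \<sigma>'_def J_def)
        then show ?thesis using False by simp
      qed
    qed
    also have "\<dots> = det (cofm ?Z b a)"
      by (simp add: I_def J_def)
    finally show ?thesis by (simp add: M_def mkM_def)
  qed
  then have "M \<noteq> 0" using Dab by (metis vec_0 zero_index)
  moreover have "X ** M = 0" unfolding M_def by (rule XM_zero[OF kt cI2 cJ2])
  moreover have "M ** X = 0" unfolding M_def by (rule MX_zero[OF kt cI2 cJ2])
  ultimately show ?thesis by blast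
qed


lemma neighbor:
  fixes X :: "'a::comm_ring_1^'n::finite^'n"
  assumes XB: "X ** B = 0" and B: "B \<noteq> 0"
  shows "\<exists>M. M \<noteq> 0 \<and> X ** M = 0 \<and> M ** X = 0"
proof -
  obtain k k' where ck: "B$k$k' \<noteq> 0" using B by (metis vec_eq_iff zero_index)
  let ?b = "\<chi> j. B$j$k'"
  have "X *v ?b = 0"
  proof -
    have "(X *v ?b) $ i = (X ** B) $ i $ k'" for i
      by (simp add: matrix_vector_mult_def matrix_matrix_mult_def)
    then show ?thesis using XB by (simp add: vec_eq_iff)
  qed
  from det_kernel[OF this, of k] have "B$k$k' * det X = 0" by simp
  then have top: "kills (B$k$k') X CARD('n)" by (rule kills_top)
  define t where "t = (LEAST t. kills (B$k$k') X t)"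
  have kt: "kills (B$k$k') X t" unfolding t_def by (rule LeastI[of "\<lambda>t. kills (B$k$k') X t", OF top])
  have tle: "t \<le> CARD('n)" unfolding t_def by (rule Least_le[of "\<lambda>t. kills (B$k$k') X t", OF top])
  have "t \<noteq> 0" using kt not_kills0[OF ck, of X] by (metis)
  then obtain s where ts: "t = Suc s" by (cases t) auto
  have "\<not> kills (B$k$k') X s"
    using not_less_Least[of s "\<lambda>t. kills (B$k$k') X t"] ts t_def by simp
  then show ?thesis using step[of "B$k$k'" X s] kt ts tle by simp
qed


lemma walk_cons:
  "orth_walk mul z (x # ys) \<longleftrightarrow> x \<in> orth_vertices mul z \<and>
     (ys = [] \<or> (orth_adj mul z x (hd ys) \<and> orth_walk mul z ys))"
proof
  assume w: "orth_walk mul z (x # ys)"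
  show "x \<in> orth_vertices mul z \<and> (ys = [] \<or> (orth_adj mul z x (hd ys) \<and> orth_walk mul z ys))"
  proof (cases ys)
    case Nil then show ?thesis using w by (simp add: orth_walk_def)
  next
    case (Cons y ys')
    have "Suc 0 < length (x # ys)" using Cons by simp
    then have "orth_adj mul z ((x # ys) ! 0) ((x # ys) ! Suc 0)" using w unfolding orth_walk_def
      by blast
    then have "orth_adj mul z x (hd ys)" using Cons by simp
    moreover have "orth_walk mul z ys" unfolding orth_walk_def
    proof (intro conjI allI impI)
      show "ys \<noteq> []" using Cons by simp
      show "set ys \<subseteq> orth_vertices mul z" using w by (simp add: orth_walk_def)
      fix i assume "Suc i < length ys"
      then have "Suc (Suc i) < length (x # ys)" by simp
      then have "orth_adj mul z ((x # ys) ! Suc i) ((x # ys) ! Suc (Suc i))"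
        using w unfolding orth_walk_def by blast
      then show "orth_adj mul z (ys ! i) (ys ! Suc i)" by simp
    qed
    ultimately show ?thesis using w by (simp add: orth_walk_def)
  qed
next
  assume h: "x \<in> orth_vertices mul z \<and> (ys = [] \<or> (orth_adj mul z x (hd ys) \<and> orth_walk mul z ys))"
  show "orth_walk mul z (x # ys)"
  proof (cases ys)
    case Nil then show ?thesis using h by (simp add: orth_walk_def)
  next
    case (Cons y ys')
    then have a: "orth_adj mul z x y" "orth_walk mul z ys" using h by auto
    show ?thesis unfolding orth_walk_def
    proof (intro conjI allI impI)
      show "x # ys \<noteq> []" by simp
      show "set (x # ys) \<subseteq> orth_vertices mul z" using h a(2) by (auto simp: orth_walk_def)
      fix i assume i: "Suc i < length (x # ys)"
      show "orth_adj mul z ((x # ys) ! i) ((x # ys) ! Suc i)"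
      proof (cases i)
        case 0 then show ?thesis using a Cons by simp
      next
        case (Suc j) then show ?thesis using a(2) i by (simp add: orth_walk_def)
      qed
    qed
  qed
qed

definition okp where "okp mul z x y \<longleftrightarrow> x = y \<or> (mul x y = z \<and> mul y x = z)"

fun lz where
  "lz mul z [] = False"
| "lz mul z [x] = (x \<in> orth_vertices mul z)"
| "lz mul z (x # y # ys) = (x \<in> orth_vertices mul z \<and> okp mul z x y \<and> lz mul z (y # ys))"

lemma lz_walk:
  "lz mul z xs \<Longrightarrow> \<exists>ys. orth_walk mul z ys \<and> hd ys = hd xs \<and> last ys = last xs \<and> length ys \<le> length xs"
proof (induction mul z xs rule: lz.induct)
  case (1 mul z) then show ?case by simp
next
  case (2 mul z x) then show ?case
    by (intro exI[of _ "[x]"]) (simp add: orth_walk_def)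
next
  case (3 mul z x y ys)
  then obtain ws where ws: "orth_walk mul z ws" "hd ws = y" "last ws = last (y # ys)" "length ws \<le> length (y # ys)"
    by auto
  have ne: "ws \<noteq> []" using ws(1) by (simp add: orth_walk_def)
  show ?case
  proof (cases "x = y")
    case True then show ?thesis using ws by (intro exI[of _ ws]) auto
  next
    case False
    have yv: "y \<in> orth_vertices mul z" using ws ne by (auto simp: orth_walk_def)
    have "orth_adj mul z x y" using 3(2) False yv by (auto simp: orth_adj_def okp_def)
    then have "orth_walk mul z (x # ws)" using ws ne 3(2) by (simp add: walk_cons)
    then show ?thesis using ws ne by (intro exI[of _ "x # ws"]) auto
  qed
qed


definition sm :: "'a::comm_ring_1 \<Rightarrow> 'a^'n^'n \<Rightarrow> 'a^'n^'n" where
  "sm r A = (\<chi> i j. r * A$i$j)"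

lemma sm_mult_right: "(A::'a::comm_ring_1^'n::finite^'n) ** sm r B = sm r (A ** B)"
  by (simp add: vec_eq_iff sm_def matrix_matrix_mult_def sum_distrib_left mult_ac)

lemma sm_mult_left: "sm r (A::'a::comm_ring_1^'n::finite^'n) ** B = sm r (A ** B)"
  by (simp add: vec_eq_iff sm_def matrix_matrix_mult_def sum_distrib_left mult_ac)

lemma sm_zero[simp]: "sm r 0 = 0" by (simp add: vec_eq_iff sm_def)
lemma sm_0[simp]: "sm 0 A = 0" by (simp add: vec_eq_iff sm_def)
lemma sm_sm[simp]: "sm r (sm s A) = sm (r * s) A" by (simp add: vec_eq_iff sm_def mult_ac)
lemma sm_1[simp]: "sm 1 A = A" by (simp add: vec_eq_iff sm_def)
lemma sm_I_nz: "t \<noteq> 0 \<Longrightarrow> sm t (mat 1 :: 'a::comm_ring_1^'n^'n) \<noteq> 0"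
  by (auto simp: vec_eq_iff sm_def mat_def)

lemma vert:
  fixes P Q :: "'a::comm_ring_1^'n::finite^'n"
  assumes "P \<noteq> 0" "Q \<noteq> 0" "P ** Q = 0" "Q ** P = 0"
  shows "P \<in> orth_vertices matrix_matrix_mult 0"
  using assms by (auto simp: orth_vertices_def two_sided_zd_def)

lemma chain5:
  fixes X Y P Z Q :: "'a::comm_ring_1^'n::finite^'n"
  defines "V \<equiv> orth_vertices (matrix_matrix_mult :: 'a^'n^'n \<Rightarrow> _) 0"
  assumes "X \<in> V" "P \<in> V" "Z \<in> V" "Q \<in> V" "Y \<in> V"
    and "okp matrix_matrix_mult 0 X P" "okp matrix_matrix_mult 0 P Z"
    "okp matrix_matrix_mult 0 Z Q" "okp matrix_matrix_mult 0 Q Y"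
  shows "\<exists>xs. orth_walk (matrix_matrix_mult :: 'a^'n^'n \<Rightarrow> _) 0 xs \<and> hd xs = X \<and> last xs = Y \<and> length xs \<le> 5"
proof -
  have "lz (matrix_matrix_mult :: 'a^'n^'n \<Rightarrow> _) 0 [X, P, Z, Q, Y]"
    using assms by simp
  from lz_walk[OF this] show ?thesis by auto
qed


lemma nbr_vertex:
  fixes X :: "'a::comm_ring_1^'n::finite^'n"
  assumes "X \<in> orth_vertices matrix_matrix_mult 0"
  shows "\<exists>M. M \<noteq> 0 \<and> X ** M = 0 \<and> M ** X = 0"
proof -
  from assms have "\<exists>B::'a^'n^'n. B \<noteq> 0 \<and> X ** B = 0"
    unfolding orth_vertices_def two_sided_zd_def by simp
  then obtain B :: "'a^'n^'n" where "B \<noteq> 0" "X ** B = 0" by blast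
  then show ?thesis using neighbor[of X B] by simp
qed

lemma okp_sm:
  fixes A B :: "'a::comm_ring_1^'n::finite^'n"
  assumes "r * s = 0"
  shows "okp matrix_matrix_mult 0 (sm r A) (sm s B)"
  using assms by (simp add: okp_def sm_mult_right sm_mult_left mult.commute)

lemma okp_nb:
  fixes X M :: "'a::comm_ring_1^'n::finite^'n"
  assumes "X ** M = 0" "M ** X = 0"
  shows "okp matrix_matrix_mult 0 X (sm r M)" "okp matrix_matrix_mult 0 (sm r M) X"
  using assms by (simp_all add: okp_def sm_mult_right sm_mult_left)

lemma okp_I:
  fixes M :: "'a::comm_ring_1^'n::finite^'n"
  assumes "sm (t * r) M = 0"
  shows "okp matrix_matrix_mult 0 (sm r M) (sm t (mat 1))" "okp matrix_matrix_mult 0 (sm t (mat 1)) (sm r M)"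
  using assms by (simp_all add: okp_def sm_mult_right sm_mult_left mult.commute)

lemma short_walk:
  fixes X Y :: "'a::comm_ring_1^'n::finite^'n"
  defines "V \<equiv> orth_vertices (matrix_matrix_mult :: 'a^'n^'n \<Rightarrow> _) 0"
  assumes zd: "\<exists>x::'a. x \<noteq> 0 \<and> (\<exists>y::'a. y \<noteq> 0 \<and> x * y = 0)"
    and XV: "X \<in> V" and YV: "Y \<in> V"
  shows "\<exists>xs. orth_walk (matrix_matrix_mult :: 'a^'n^'n \<Rightarrow> _) 0 xs \<and> hd xs = X \<and> last xs = Y \<and> length xs \<le> 5"
proof -
  obtain \<beta> \<gamma> :: 'a where b: "\<beta> \<noteq> 0" and g: "\<gamma> \<noteq> 0" and bg: "\<beta> * \<gamma> = 0" using zd by blast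
  have gb: "\<gamma> * \<beta> = 0" using bg by (simp add: mult.commute)
  obtain M where M: "M \<noteq> 0" "X ** M = 0" "M ** X = 0" using nbr_vertex XV unfolding V_def by blast
  obtain M' where M': "M' \<noteq> 0" "Y ** M' = 0" "M' ** Y = 0" using nbr_vertex YV unfolding V_def by blast
  have X0: "X \<noteq> 0" using XV by (simp add: V_def orth_vertices_def)
  have Y0: "Y \<noteq> 0" using YV by (simp add: V_def orth_vertices_def)
  have MV: "sm r M \<in> V" if "sm r M \<noteq> 0" for r
    unfolding V_def by (rule vert[OF that X0]) (simp_all add: M sm_mult_right sm_mult_left)
  have M'V: "sm r M' \<in> V" if "sm r M' \<noteq> 0" for r
    unfolding V_def by (rule vert[OF that Y0]) (simp_all add: M' sm_mult_right sm_mult_left)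
  have IV: "sm t (mat 1) \<in> V" if "t \<noteq> 0" "sm t M = 0" for t
    unfolding V_def by (rule vert[OF sm_I_nz[OF that(1)] M(1)]) (simp_all add: sm_mult_right sm_mult_left that)
  have IV': "sm t (mat 1) \<in> V" if "t \<noteq> 0" "sm t M' = 0" for t
    unfolding V_def by (rule vert[OF sm_I_nz[OF that(1)] M'(1)]) (simp_all add: sm_mult_right sm_mult_left that)
  have r1: "okp matrix_matrix_mult 0 P P" for P :: "'a^'n^'n" by (simp add: okp_def)
  note nb = okp_nb[OF M(2,3)] okp_nb[OF M'(2,3)]
    okp_nb[OF M(2,3), of 1, simplified] okp_nb[OF M'(2,3), of 1, simplified]
  note c5 = chain5[OF XV[unfolded V_def] _ _ _ YV[unfolded V_def], folded V_def]
  have M1: "M = sm 1 M" "M' = sm 1 M'" by simp_all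
  show ?thesis
  proof (cases "sm \<beta> M \<noteq> 0 \<and> sm \<gamma> M' \<noteq> 0")
    case True
    show ?thesis
      by (rule c5[of "sm \<beta> M" "sm \<gamma> M'" "sm \<gamma> M'"])
        (use True MV M'V nb r1 okp_sm[OF bg] in auto)
  next
    case F1: False
    show ?thesis
    proof (cases "sm \<gamma> M \<noteq> 0 \<and> sm \<beta> M' \<noteq> 0")
      case True
      show ?thesis
        by (rule c5[of "sm \<gamma> M" "sm \<beta> M'" "sm \<beta> M'"])
          (use True MV M'V nb r1 okp_sm[OF gb] in auto)
    next
      case F2: False
      show ?thesis
      proof (cases "sm \<beta> M = 0 \<and> sm \<beta> M' = 0")
        case True
        have o: "okp matrix_matrix_mult 0 (sm 1 M) (sm \<beta> (mat 1))" "okp matrix_matrix_mult 0 (sm \<beta> (mat 1)) (sm 1 M')"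
          using okp_I[of \<beta> 1 M] okp_I[of \<beta> 1 M'] True by simp_all
        show ?thesis
          by (rule c5[of "sm 1 M" "sm \<beta> (mat 1)" "sm 1 M'"])
            (use o nb MV[of 1] M'V[of 1] IV[of \<beta>] True b M(1) M'(1) in auto)
      next
        case F3: False
        show ?thesis
        proof (cases "sm \<gamma> M = 0 \<and> sm \<gamma> M' = 0")
          case True
          have o: "okp matrix_matrix_mult 0 (sm 1 M) (sm \<gamma> (mat 1))" "okp matrix_matrix_mult 0 (sm \<gamma> (mat 1)) (sm 1 M')"
            using okp_I[of \<gamma> 1 M] okp_I[of \<gamma> 1 M'] True by simp_all
          show ?thesis
            by (rule c5[of "sm 1 M" "sm \<gamma> (mat 1)" "sm 1 M'"])
              (use o nb MV[of 1] M'V[of 1] IV[of \<gamma>] True g M(1) M'(1) in auto)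
        next
          case F4: False
          show ?thesis
          proof (cases "sm \<beta> M = 0")
            case True
            then have h: "sm \<gamma> M = 0" "sm \<beta> M' \<noteq> 0" using F1 F2 F3 F4 by auto
            have o: "okp matrix_matrix_mult 0 (sm 1 M) (sm \<gamma> (mat 1))" "okp matrix_matrix_mult 0 (sm \<gamma> (mat 1)) (sm \<beta> M')"
              using okp_I[of \<gamma> 1 M] okp_I[of \<gamma> \<beta> M'] h gb by simp_all
            show ?thesis
              by (rule c5[of "sm 1 M" "sm \<gamma> (mat 1)" "sm \<beta> M'"])
                (use o nb MV[of 1] M'V IV[of \<gamma>] h g M(1) in auto)
          next
            case False
            then have h: "sm \<gamma> M' = 0" "sm \<beta> M' = 0" using F1 F2 F3 F4 by auto
            have o: "okp matrix_matrix_mult 0 (sm \<beta> M) (sm \<gamma> (mat 1))" "okp matrix_matrix_mult 0 (sm \<gamma> (mat 1)) (sm 1 M')"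
              using okp_I[of \<gamma> \<beta> M] okp_I[of \<gamma> 1 M'] h gb by simp_all
            show ?thesis
              by (rule c5[of "sm \<beta> M" "sm \<gamma> (mat 1)" "sm 1 M'"])
                (use o nb MV M'V[of 1] IV'[of \<gamma>] h False g M'(1) in auto)
          qed
        qed
      qed
    qed
  qed
qed

theorem theorem4:
  fixes dummy :: "'a::comm_ring_1 \<times> 'n::finite"
  assumes "\<exists>x::'a. x \<noteq> 0 \<and> (\<exists>y::'a. y \<noteq> 0 \<and> x * y = 0)"
    and "CARD('n) > 1"
  shows "orth_connected (matrix_matrix_mult :: 'a^'n^'n \<Rightarrow> 'a^'n^'n \<Rightarrow> 'a^'n^'n) 0
       \<and> orth_diam (matrix_matrix_mult :: 'a^'n^'n \<Rightarrow> 'a^'n^'n \<Rightarrow> 'a^'n^'n) 0 \<le> 4"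
proof
  have W: "\<exists>xs. orth_walk (matrix_matrix_mult :: 'a^'n^'n \<Rightarrow> _) 0 xs \<and> hd xs = X \<and> last xs = Y \<and> length xs \<le> 5"
    if "X \<in> orth_vertices (matrix_matrix_mult :: 'a^'n^'n \<Rightarrow> _) 0"
       "Y \<in> orth_vertices (matrix_matrix_mult :: 'a^'n^'n \<Rightarrow> _) 0" for X Y :: "'a^'n^'n"
    by (rule short_walk[OF assms(1) that])
  show "orth_connected (matrix_matrix_mult :: 'a^'n^'n \<Rightarrow> 'a^'n^'n \<Rightarrow> 'a^'n^'n) 0"
    unfolding orth_connected_def using W by blast
  show "orth_diam (matrix_matrix_mult :: 'a^'n^'n \<Rightarrow> 'a^'n^'n \<Rightarrow> 'a^'n^'n) 0 \<le> 4"
    unfolding orth_diam_def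
  proof (intro SUP_least)
    fix X Y :: "'a^'n^'n"
    assume "X \<in> orth_vertices (matrix_matrix_mult :: 'a^'n^'n \<Rightarrow> _) 0"
       "Y \<in> orth_vertices (matrix_matrix_mult :: 'a^'n^'n \<Rightarrow> _) 0"
    then obtain xs where xs: "orth_walk (matrix_matrix_mult :: 'a^'n^'n \<Rightarrow> _) 0 xs" "hd xs = X" "last xs = Y" "length xs \<le> 5"
      using W by blast
    have "orth_dist (matrix_matrix_mult :: 'a^'n^'n \<Rightarrow> _) 0 X Y \<le> enat (length xs - 1)"
      unfolding orth_dist_def by (rule INF_lower) (use xs in simp)
    also have "\<dots> \<le> 4" using xs(4) by (simp add: numeral_eq_enat)
    finally show "orth_dist (matrix_matrix_mult :: 'a^'n^'n \<Rightarrow> _) 0 X Y \<le> 4" .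
  qed
qed

end
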